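(* Let $\mathcal{X}=G^{\min}/P$ be the affine Grassmannian of the minimal affine Kac–Moody group $G^{\min}=\widehat{SL_2}$, with $P$ the standard maximal parabolic, and let $c^k_{n,m}\in\mathbb{Z}[\alpha_0,\alpha_1]$ be defined by $$\hat{\varepsilon}_n\cdot\hat{\varepsilon}_m=\sum_{k=\max\{n,m\}}^{n+m}c^k_{n,m}\,\hat{\varepsilon}_k\quad\text{in } H^\bullet_T(\mathcal{X}),$$ with $c^k_{n,m}=0$ for $k<\max\{n,m\}$ or $k>n+m$. Then for integers $1\le n\le m$ and $0\le i\le n$, $$c^{m+i}_{n,m}=\frac{1}{n!}\left[\frac{(m+i)!}{m!}\,Q^{n-i}_{m,i}-\sum_{k=\max\{i,1\}}^{n-1}k!\,Q^{n-k}_{1,k-1}\,c^{m+i}_{k,m}\right].$$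
   Context: $T$ is the adjoint torus of $\widehat{SL_2}$, and $H^\bullet_T(\mathrm{pt})$ is identified with the polynomial ring $\mathbb{Z}[\alpha_0,\alpha_1]$ in the simple roots (graded with $\alpha_0,\alpha_1$ in degree $1$); $c^k_{n,m}$ is homogeneous of degree $n+m-k$. $\{\hat{\varepsilon}_i\}_{i\ge0}$ is the $T$-equivariant Schubert basis of $H^\bullet_T(\mathcal{X})$ over $\mathbb{Z}[\alpha_0,\alpha_1]$ (Kumar's basis $\hat{\varepsilon}_{w_i}$), indexed by $w_i$, the alternating word of length $i$ in $s_0,s_1$ ending in $s_0$; $\hat\varepsilon_0=1$ and it satisfies the equivariant Chevalley formula $\hat{\varepsilon}_1\cdot\hat{\varepsilon}_m=q_m\hat{\varepsilon}_m+(m+1)\hat{\varepsilon}_{m+1}$, where $q_m:=\lceil m/2\rceil^2\alpha_0+(\lfloor m/2\rfloor^2+\lfloor m/2\rfloor)\alpha_1$. For $d\ge0$, $i\ge1$, $j\ge0$, $Q^d_{i,j}$ denotes the complete homogeneous symmetric polynomial of degree $d$ in $q_i,q_{i+1},\dots,q_{i+j}$, i.e. the sum of all monomials of degree $d$ in these $j+1$ variables ($Q^0_{i,j}=1$). *)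

theory Defs
  imports "HOL-Computational_Algebra.Polynomial"
begin

text \<open>The coefficient ring H_T(pt) = Z[alpha0, alpha1], modelled as
  int poly poly: alpha1 is the outer variable, alpha0 the inner variable.\<close>

type_synonym coeffring = "int poly poly"

definition alpha0 :: coeffring where "alpha0 = [:[:0, 1:]:]"
definition alpha1 :: coeffring where "alpha1 = [:0, 1:]"

definition qq :: "nat \<Rightarrow> coeffring" where
  "qq m = of_nat (((m + 1) div 2)^2) * alpha0
         + of_nat ((m div 2)^2 + m div 2) * alpha1"

text \<open>Q^d_{i,j}: complete homogeneous symmetric polynomial of degree d in
  q_i, ..., q_{i+j}: sum over all exponent vectors f on {0..j} with total degree d.\<close>
definition QQ :: "nat \<Rightarrow> nat \<Rightarrow> nat \<Rightarrow> coeffring" where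
  "QQ d i j = (\<Sum>f \<in> {f :: nat \<Rightarrow> nat. (\<forall>t. j < t \<longrightarrow> f t = 0) \<and> (\<Sum>t\<le>j. f t) = d}.
                  \<Prod>t\<le>j. qq (i + t) ^ f t)"

end

theory Submission
  imports Defs "HOL-Library.FuncSet"
begin

definition FF :: "nat \<Rightarrow> nat \<Rightarrow> (nat \<Rightarrow> nat) set" where
  "FF d j = {f :: nat \<Rightarrow> nat. (\<forall>t. j < t \<longrightarrow> f t = 0) \<and> (\<Sum>t\<le>j. f t) = d}"

definition SS :: "(nat \<Rightarrow> coeffring) \<Rightarrow> nat \<Rightarrow> nat \<Rightarrow> coeffring" where
  "SS x d j = (\<Sum>f \<in> FF d j. \<Prod>t\<le>j. x t ^ f t)"

lemma QQ_SS: "QQ d i j = SS (\<lambda>t. qq (i + t)) d j"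
  unfolding QQ_def SS_def FF_def by simp

lemma FF_finite: "finite (FF d j)"
proof -
  have "FF d j \<subseteq> (\<lambda>g t. if t \<le> j then g t else 0) ` (PiE {..j} (\<lambda>_. {..d}))"
  proof
    fix f assume f: "f \<in> FF d j"
    have le: "f t \<le> d" if "t \<le> j" for t
      using f that member_le_sum[of t "{..j}" f] unfolding FF_def by auto
    have "f = (\<lambda>t. if t \<le> j then restrict f {..j} t else 0)"
      using f unfolding FF_def by (auto simp: fun_eq_iff restrict_apply')
    moreover have "restrict f {..j} \<in> PiE {..j} (\<lambda>_. {..d})" using le by auto
    ultimately show "f \<in> (\<lambda>g t. if t \<le> j then g t else 0) ` (PiE {..j} (\<lambda>_. {..d}))"
      by blast
  qed
  moreover have "finite (PiE {..j} (\<lambda>_. {..d::nat}))" by (simp add: finite_PiE)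
  ultimately show ?thesis using finite_subset by blast
qed

lemma FF_0: "FF d 0 = {(\<lambda>t. 0)(0 := d)}"
  unfolding FF_def by (auto simp: fun_eq_iff)

lemma SS_0: "SS x d 0 = x 0 ^ d"
  unfolding SS_def FF_0 by simp

lemma SS_Suc: "SS x d (Suc j) = (\<Sum>e\<le>d. x (Suc j) ^ e * SS x (d - e) j)"
proof -
  let ?h = "\<lambda>f. \<Prod>t\<le>Suc j. x t ^ f t"
  have grp: "(\<Sum>e\<le>d. sum ?h {f. f \<in> FF d (Suc j) \<and> f (Suc j) = e}) = sum ?h (FF d (Suc j))"
  proof (rule sum.group[OF FF_finite finite_atMost])
    show "(\<lambda>f. f (Suc j)) ` FF d (Suc j) \<subseteq> {..d}"
    proof
      fix y assume "y \<in> (\<lambda>f. f (Suc j)) ` FF d (Suc j)"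
      then obtain f where f: "f \<in> FF d (Suc j)" "y = f (Suc j)" by auto
      then show "y \<in> {..d}" using member_le_sum[of "Suc j" "{..Suc j}" f] unfolding FF_def by auto
    qed
  qed
  have piece: "sum ?h {f. f \<in> FF d (Suc j) \<and> f (Suc j) = e} = x (Suc j) ^ e * SS x (d - e) j"
    if e: "e \<le> d" for e
  proof -
    have bij: "bij_betw (\<lambda>g. g(Suc j := e)) (FF (d - e) j) {f. f \<in> FF d (Suc j) \<and> f (Suc j) = e}"
    proof (rule bij_betw_byWitness[where f' = "\<lambda>f. f(Suc j := 0)"])
      show "\<forall>a\<in>FF (d - e) j. (a(Suc j := e))(Suc j := 0) = a"
        unfolding FF_def by (auto simp: fun_eq_iff)
      show "\<forall>a'\<in>{f. f \<in> FF d (Suc j) \<and> f (Suc j) = e}. (a'(Suc j := 0))(Suc j := e) = a'"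
        by (auto simp: fun_eq_iff)
      show "(\<lambda>g. g(Suc j := e)) ` FF (d - e) j \<subseteq> {f. f \<in> FF d (Suc j) \<and> f (Suc j) = e}"
      proof (rule image_subsetI)
        fix g assume g: "g \<in> FF (d - e) j"
        have "(\<Sum>t\<le>j. (g(Suc j := e)) t) = (\<Sum>t\<le>j. g t)" by (rule sum.cong) auto
        then show "g(Suc j := e) \<in> {f. f \<in> FF d (Suc j) \<and> f (Suc j) = e}" using g e unfolding FF_def by auto
      qed
      show "(\<lambda>f. f(Suc j := 0)) ` {f. f \<in> FF d (Suc j) \<and> f (Suc j) = e} \<subseteq> FF (d - e) j"
      proof (rule image_subsetI)
        fix f assume "f \<in> {f. f \<in> FF d (Suc j) \<and> f (Suc j) = e}"
        then have f: "f \<in> FF d (Suc j)" "f (Suc j) = e" by auto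
        have "(\<Sum>t\<le>j. (f(Suc j := 0)) t) = (\<Sum>t\<le>j. f t)" by (rule sum.cong) auto
        then show "f(Suc j := 0) \<in> FF (d - e) j" using f unfolding FF_def by auto
      qed
    qed
    have "sum ?h {f. f \<in> FF d (Suc j) \<and> f (Suc j) = e} = sum (?h \<circ> (\<lambda>g. g(Suc j := e))) (FF (d - e) j)"
      using sum.reindex_bij_betw[OF bij, of ?h] by simp
    also have "\<dots> = (\<Sum>g\<in>FF (d - e) j. x (Suc j) ^ e * (\<Prod>t\<le>j. x t ^ g t))"
    proof (rule sum.cong[OF refl])
      fix g assume "g \<in> FF (d - e) j"
      have "(\<Prod>t\<le>j. x t ^ (g(Suc j := e)) t) = (\<Prod>t\<le>j. x t ^ g t)" by (rule prod.cong) auto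
      then show "(?h \<circ> (\<lambda>g. g(Suc j := e))) g = x (Suc j) ^ e * (\<Prod>t\<le>j. x t ^ g t)"
        by (simp add: mult.commute)
    qed
    also have "\<dots> = x (Suc j) ^ e * SS x (d - e) j"
      unfolding SS_def by (simp add: sum_distrib_left)
    finally show ?thesis .
  qed
  have "SS x d (Suc j) = sum ?h (FF d (Suc j))" unfolding SS_def by simp
  also have "\<dots> = (\<Sum>e\<le>d. sum ?h {f. f \<in> FF d (Suc j) \<and> f (Suc j) = e})" using grp by simp
  also have "\<dots> = (\<Sum>e\<le>d. x (Suc j) ^ e * SS x (d - e) j)" by (rule sum.cong[OF refl], rule piece) simp
  finally show ?thesis .
qed

lemma SS_zero_deg: "SS x 0 j = 1"
  by (induction j) (auto simp: SS_0 SS_Suc)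

lemma SS_rec: "SS x (Suc d) (Suc j) = x (Suc j) * SS x d (Suc j) + SS x (Suc d) j"
proof -
  have "SS x (Suc d) (Suc j) = (\<Sum>e\<le>Suc d. x (Suc j) ^ e * SS x (Suc d - e) j)" by (rule SS_Suc)
  also have "\<dots> = (\<Sum>e\<le>d. x (Suc j) ^ Suc e * SS x (Suc d - Suc e) j) + SS x (Suc d) j"
    by (subst sum.atMost_Suc_shift) simp
  also have "(\<Sum>e\<le>d. x (Suc j) ^ Suc e * SS x (Suc d - Suc e) j) = x (Suc j) * SS x d (Suc j)"
    by (simp add: SS_Suc sum_distrib_left mult.assoc)
  finally show ?thesis .
qed

lemma SS_shift: "x 0 = 0 \<Longrightarrow> SS x d (Suc j) = SS (\<lambda>t. x (Suc t)) d j"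
proof (induction j arbitrary: d)
  case 0
  have "SS x d (Suc 0) = (\<Sum>e\<le>d. x 1 ^ e * x 0 ^ (d - e))" by (simp add: SS_Suc SS_0)
  also have "\<dots> = x 1 ^ d"
  proof -
    have "(\<Sum>e\<le>d. x 1 ^ e * x 0 ^ (d - e)) = (\<Sum>e\<in>{d}. x 1 ^ e * x 0 ^ (d - e))"
      by (rule sum.mono_neutral_right) (use 0 in auto)
    then show ?thesis by simp
  qed
  finally show ?case by (simp add: SS_0)
next
  case (Suc j)
  have "SS x d (Suc (Suc j)) = (\<Sum>e\<le>d. x (Suc (Suc j)) ^ e * SS x (d - e) (Suc j))"
    by (rule SS_Suc)
  also have "\<dots> = (\<Sum>e\<le>d. x (Suc (Suc j)) ^ e * SS (\<lambda>t. x (Suc t)) (d - e) j)"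
    using Suc by simp
  also have "\<dots> = SS (\<lambda>t. x (Suc t)) d (Suc j)" by (simp add: SS_Suc)
  finally show ?case .
qed

fun aa :: "nat \<Rightarrow> nat \<Rightarrow> nat \<Rightarrow> coeffring" where
  "aa m 0 j = (if j = 0 then 1 else 0)"
| "aa m (Suc n) j = qq (m + j) * aa m n j + (if j = 0 then 0 else of_nat (m + j) * aa m n (j - 1))"

definition PP :: "nat \<Rightarrow> nat \<Rightarrow> nat" where "PP m j = fact (m + j) div fact m"

lemma PP_0: "PP m 0 = 1" by (simp add: PP_def)

lemma PP_Suc: "PP m (Suc j) = (m + Suc j) * PP m j"
proof -
  have d: "fact m dvd (fact (m + j) :: nat)" by (rule fact_dvd) simp
  have "fact (m + Suc j) = (m + Suc j) * (fact (m + j) :: nat)" by simp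
  then show ?thesis unfolding PP_def using d by (simp add: div_mult_swap)
qed

lemma aa_closed:
  "aa m n j = (if j \<le> n then of_nat (PP m j) * SS (\<lambda>t. qq (m + t)) (n - j) j else 0)"
proof (induction n arbitrary: j)
  case 0
  then show ?case by (simp add: PP_0 SS_0)
next
  case (Suc n)
  let ?x = "\<lambda>t. qq (m + t)"
  show ?case
  proof (cases j)
    case 0
    then show ?thesis using Suc by (simp add: PP_0 SS_0)
  next
    case (Suc j')
    have IH1: "aa m n j = (if j \<le> n then of_nat (PP m j) * SS ?x (n - j) j else 0)" using Suc.IH .
    have IH2: "aa m n j' = (if j' \<le> n then of_nat (PP m j') * SS ?x (n - j') j' else 0)" using Suc.IH .
    have PPj: "of_nat (PP m j) = (of_nat (m + j) :: coeffring) * of_nat (PP m j')"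
      using Suc by (simp add: PP_Suc algebra_simps)
    have e: "aa m (Suc n) j = qq (m + j) * aa m n j + of_nat (m + j) * aa m n j'" using Suc by simp
    show ?thesis
    proof (cases "j \<le> n")
      case True
      then have nj: "n - j' = Suc (n - j)" "Suc n - j = Suc (n - j)" using Suc by auto
      have "SS ?x (Suc (n - j)) (Suc j') = ?x (Suc j') * SS ?x (n - j) (Suc j') + SS ?x (Suc (n - j)) j'"
        by (rule SS_rec)
      then show ?thesis using True Suc e IH1 IH2 nj PPj
        by (simp add: algebra_simps)
    next
      case False
      show ?thesis
      proof (cases "j = Suc n")
        case True
        then have "j' = n" using Suc by simp
        then show ?thesis using e IH1 IH2 True PPj by (simp add: SS_zero_deg)
      next
        case False
        then show ?thesis using e IH1 IH2 \<open>\<not> j \<le> n\<close> Suc by simp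
      qed
    qed
  qed
qed

lemma qq0: "qq 0 = 0" by (simp add: qq_def)

theorem proposition6p2:
  fixes \<iota> :: "coeffring \<Rightarrow> 'h :: comm_ring_1"
    and eps :: "nat \<Rightarrow> 'h"
    and c :: "nat \<Rightarrow> nat \<Rightarrow> nat \<Rightarrow> coeffring"
  assumes hom_one: "\<iota> 1 = 1"
    and hom_add: "\<And>a b. \<iota> (a + b) = \<iota> a + \<iota> b"
    and hom_mult: "\<And>a b. \<iota> (a * b) = \<iota> a * \<iota> b"
    and indep: "\<And>(a :: nat \<Rightarrow> coeffring) N. (\<Sum>k\<le>N. \<iota> (a k) * eps k) = 0 \<Longrightarrow> \<forall>k\<le>N. a k = 0"
    and span: "\<And>x. \<exists>(a :: nat \<Rightarrow> coeffring) N. x = (\<Sum>k\<le>N. \<iota> (a k) * eps k)"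
    and eps0: "eps 0 = 1"
    and chevalley: "\<And>m. eps 1 * eps m = \<iota> (qq m) * eps m + of_nat (m + 1) * eps (m + 1)"
    and structure_consts: "\<And>n m. eps n * eps m = (\<Sum>k = max n m..n + m. \<iota> (c k n m) * eps k)"
    and c_zero: "\<And>k n m. k < max n m \<or> n + m < k \<Longrightarrow> c k n m = 0"
    and nm: "1 \<le> n" "n \<le> m"
    and i_le: "i \<le> n"
  shows "of_nat (fact n) * c (m + i) n m =
           of_nat (fact (m + i) div fact m) * QQ (n - i) m i
           - (\<Sum>k = max i 1..n - 1. of_nat (fact k) * QQ (n - k) 1 (k - 1) * c (m + i) k m)"
proof -
  have i0: "\<iota> 0 = 0" using hom_add[of 0 0] by simp
  have i_diff: "\<iota> (a - b) = \<iota> a - \<iota> b" for a b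
    using hom_add[of "a - b" b] by (simp add: algebra_simps)
  have i_sum: "\<iota> (\<Sum>k\<in>A. f k) = (\<Sum>k\<in>A. \<iota> (f k))" for A and f :: "nat \<Rightarrow> coeffring"
  proof (cases "finite A")
    case True
    then show ?thesis by (induction A rule: finite_induct) (simp_all add: i0 hom_add)
  next
    case False
    then show ?thesis by (simp add: i0)
  qed
  have aa_big: "aa m' n' j = 0" if "n' < j" for m' n' j using that by (simp add: aa_closed)
  have pow: "eps 1 ^ n' * eps m' = (\<Sum>j\<le>n'. \<iota> (aa m' n' j) * eps (m' + j))" for n' m'
  proof (induction n')
    case 0
    then show ?case by (simp add: hom_one)
  next
    case (Suc n')
    have "eps 1 ^ Suc n' * eps m' = eps 1 * (eps 1 ^ n' * eps m')" by (simp add: mult.assoc)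
    also have "\<dots> = (\<Sum>j\<le>n'. \<iota> (aa m' n' j) * (eps 1 * eps (m' + j)))"
      using Suc by (simp add: sum_distrib_left algebra_simps)
    also have "\<dots> = (\<Sum>j\<le>n'. \<iota> (qq (m' + j)) * \<iota> (aa m' n' j) * eps (m' + j))
                   + (\<Sum>j\<le>n'. of_nat (m' + Suc j) * \<iota> (aa m' n' j) * eps (m' + Suc j))"
      unfolding sum.distrib[symmetric]
    proof (rule sum.cong[OF refl])
      fix j
      show "\<iota> (aa m' n' j) * (eps 1 * eps (m' + j)) = \<iota> (qq (m' + j)) * \<iota> (aa m' n' j) * eps (m' + j)
            + of_nat (m' + Suc j) * \<iota> (aa m' n' j) * eps (m' + Suc j)"
        by (simp only: chevalley) (simp add: algebra_simps)
    qed
    also have "(\<Sum>j\<le>n'. \<iota> (qq (m' + j)) * \<iota> (aa m' n' j) * eps (m' + j))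
             = (\<Sum>j\<le>Suc n'. \<iota> (qq (m' + j)) * \<iota> (aa m' n' j) * eps (m' + j))"
      by (simp add: aa_big i0)
    also have "(\<Sum>j\<le>n'. of_nat (m' + Suc j) * \<iota> (aa m' n' j) * eps (m' + Suc j))
             = (\<Sum>j\<le>Suc n'. (if j = 0 then 0 else of_nat (m' + j) * \<iota> (aa m' n' (j - 1))) * eps (m' + j))"
      by (subst sum.atMost_Suc_shift) simp
    also have "(\<Sum>j\<le>Suc n'. \<iota> (qq (m' + j)) * \<iota> (aa m' n' j) * eps (m' + j))
             + (\<Sum>j\<le>Suc n'. (if j = 0 then 0 else of_nat (m' + j) * \<iota> (aa m' n' (j - 1))) * eps (m' + j))
             = (\<Sum>j\<le>Suc n'. \<iota> (aa m' (Suc n') j) * eps (m' + j))"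
    proof -
      have i_nat: "\<iota> (of_nat k) = of_nat k" for k
        by (induction k) (simp_all add: i0 hom_one hom_add)
      have "\<iota> (aa m' (Suc n') j) = \<iota> (qq (m' + j)) * \<iota> (aa m' n' j)
              + (if j = 0 then 0 else of_nat (m' + j) * \<iota> (aa m' n' (j - 1)))" for j
        by (simp add: hom_add hom_mult i0 i_nat)
      then show ?thesis by (simp add: sum.distrib[symmetric] algebra_simps)
    qed
    finally show ?case .
  qed
  define N where "N = n + m"
  define A where "A l = (if m \<le> l then aa m n (l - m) else 0)" for l
  define B where "B l = (\<Sum>k\<le>n. aa 0 n k * c l k m)" for l
  have L: "eps 1 ^ n * eps m = (\<Sum>l\<le>N. \<iota> (A l) * eps l)"
  proof -
    have "(\<Sum>l\<le>N. \<iota> (A l) * eps l) = (\<Sum>l\<in>{m..n+m}. \<iota> (A l) * eps l)"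
      by (rule sum.mono_neutral_right) (auto simp: N_def A_def i0)
    also have "\<dots> = (\<Sum>l\<in>{0+m..n+m}. \<iota> (A l) * eps l)" by simp
    also have "\<dots> = (\<Sum>j\<in>{0..n}. \<iota> (A (j + m)) * eps (j + m))"
      by (rule sum.shift_bounds_cl_nat_ivl)
    also have "\<dots> = (\<Sum>j\<le>n. \<iota> (aa m n j) * eps (m + j))"
      by (simp add: A_def atLeast0AtMost add.commute)
    finally show ?thesis using pow[of n m] by simp
  qed
  have R: "eps 1 ^ n * eps m = (\<Sum>l\<le>N. \<iota> (B l) * eps l)"
  proof -
    have "eps 1 ^ n = (\<Sum>k\<le>n. \<iota> (aa 0 n k) * eps k)" using pow[of n 0] by (simp add: eps0)
    then have "eps 1 ^ n * eps m = (\<Sum>k\<le>n. \<iota> (aa 0 n k) * (eps k * eps m))"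
      by (simp add: sum_distrib_right mult.assoc)
    also have "\<dots> = (\<Sum>k\<le>n. \<iota> (aa 0 n k) * (\<Sum>l\<le>N. \<iota> (c l k m) * eps l))"
    proof (rule sum.cong[OF refl])
      fix k assume k: "k \<in> {..n}"
      have "(\<Sum>l\<le>N. \<iota> (c l k m) * eps l) = (\<Sum>l = max k m..k + m. \<iota> (c l k m) * eps l)"
        by (rule sum.mono_neutral_right) (use k in \<open>auto simp: N_def i0 c_zero\<close>)
      then show "\<iota> (aa 0 n k) * (eps k * eps m) = \<iota> (aa 0 n k) * (\<Sum>l\<le>N. \<iota> (c l k m) * eps l)"
        by (simp add: structure_consts)
    qed
    also have "\<dots> = (\<Sum>l\<le>N. (\<Sum>k\<le>n. \<iota> (aa 0 n k) * \<iota> (c l k m)) * eps l)"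
      by (simp add: sum_distrib_left sum_distrib_right mult.assoc sum.swap[of _ "{..n}"])
    also have "\<dots> = (\<Sum>l\<le>N. \<iota> (B l) * eps l)"
      by (simp add: B_def i_sum hom_mult)
    finally show ?thesis .
  qed
  have "(\<Sum>l\<le>N. \<iota> (A l - B l) * eps l) = 0"
    using L R by (simp add: i_diff algebra_simps sum_subtractf)
  then have "\<forall>l\<le>N. A l - B l = 0" by (rule indep)
  then have AB: "A (m + i) = B (m + i)" using i_le by (auto simp: N_def)
  then have key: "aa m n i = (\<Sum>k\<le>n. aa 0 n k * c (m + i) k m)" by (simp add: A_def B_def)
  have lhs: "aa m n i = of_nat (fact (m + i) div fact m) * QQ (n - i) m i"
    using i_le by (simp add: aa_closed PP_def QQ_SS)
  define g where "g k = of_nat (fact k) * QQ (n - k) 1 (k - 1) * c (m + i) k m" for k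
  have s1: "(\<Sum>k\<le>n. aa 0 n k * c (m + i) k m) = (\<Sum>k\<in>{1..n}. g k)"
  proof -
    have "{..n} = insert 0 {1..n}" by auto
    then have "(\<Sum>k\<le>n. aa 0 n k * c (m + i) k m) = aa 0 n 0 * c (m + i) 0 m + (\<Sum>k\<in>{1..n}. aa 0 n k * c (m + i) k m)"
      by simp
    also have "aa 0 n 0 = 0" using nm by (simp add: aa_closed SS_0 qq0)
    also have "(\<Sum>k\<in>{1..n}. aa 0 n k * c (m + i) k m) = (\<Sum>k\<in>{1..n}. g k)"
    proof (rule sum.cong[OF refl])
      fix k assume k: "k \<in> {1..n}"
      then obtain k' where k': "k = Suc k'" by (cases k) auto
      have "SS qq (n - k) k = QQ (n - k) 1 (k - 1)"
        using k' by (simp add: SS_shift qq0 QQ_SS)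
      then show "aa 0 n k * c (m + i) k m = g k"
        using k by (simp add: aa_closed PP_def g_def)
    qed
    finally show ?thesis by simp
  qed
  have s2: "(\<Sum>k\<in>{1..n}. g k) = (\<Sum>k\<in>{1..n - 1}. g k) + g n"
  proof -
    have "n = Suc (n - 1)" using nm by simp
    then have "(\<Sum>k\<in>{1..n}. g k) = (\<Sum>k\<in>{1..Suc (n - 1)}. g k)" by simp
    also have "\<dots> = (\<Sum>k\<in>{1..n - 1}. g k) + g (Suc (n - 1))" by (simp add: sum.cl_ivl_Suc)
    finally show ?thesis using \<open>n = Suc (n - 1)\<close> by simp
  qed
  have s3: "(\<Sum>k\<in>{1..n - 1}. g k) = (\<Sum>k = max i 1..n - 1. g k)"
    by (rule sum.mono_neutral_right) (auto simp: g_def c_zero)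
  have gn: "g n = of_nat (fact n) * c (m + i) n m"
    by (simp add: g_def QQ_SS SS_zero_deg)
  show ?thesis using key lhs s1 s2 s3 gn unfolding g_def[symmetric] by (simp add: algebra_simps)
qed

end
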